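(* Let $p$ be an odd prime and take $k=0$. For every $s\ge2$, the $p^0$-Fibonacci number of the vertex $V_{s,0}=\lambda\big(2sp-(2s+1),\,sp-(s+1)\big)$ on floor $2s$ is $$\mathcal M_{V_{s,0}}=\frac{p-1}{2}\Big(2(s-1)p^{s-1}-(2s-3)p^{s-2}\Big).$$
   Context: Fix an odd prime $p$ and an integer $k\ge 0$. For integers $0\le i<n$ write $\lambda(n,i)=(n-i,1^i)$ for the hook partition of $n$ with $n-i$ boxes in its first row and $i$ further boxes in its first column. If $\mu=\lambda(n',i')$ is obtained from $\lambda(n,i)$ by appending $m=(n'-i')-(n-i)\ge 0$ boxes to the first row and $n''=i'-i\ge 0$ boxes to the first column, we say $\mu$ is obtained by adding the block $B_{m,n''}$ ($m$ horizontal nodes, $n''$ vertical nodes). Put $x_s=p^k(sp-(s+1))$. The relevant part ("column $k$") of the $p$-Bratteli diagram is the graded directed graph with vertices: on floor $2k+1$, $S_i=\lambda(p^k(p-1),i)$ for $0\le i<p^k(p-1)$; on floor $2(k+s)$ ($s\ge1$), $V_{s,l}=\lambda\big(p^k(2sp-(2s+1)),\,x_s+l\big)$ for $0\le l<p^k$; on floor $2(k+s)-1$ ($s\ge2$), $W_{s,l'}=\lambda\big(p^k((2s-1)p-2s),\,x_{s-1}+l'\big)$ for $0\le l'<p^{k+1}$; and edges, each labelled by the block added: (E1) $S_i\to V_{1,l}$ exactly when $i=p^kt+l$ with $0\le t\le p-2$, block $B_{p^kt,\,p^k(p-2-t)}$; (E2) for $s\ge2$, $0\le l<p^k$, $0\le\beta\le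 p-1$: $V_{s-1,l}\to W_{s,pl+\beta}$, block $B_{p^k(p-1)-((p-1)l+\beta),\,(p-1)l+\beta}$; (E3) for $s\ge 2$, $0\le l'<p^{k+1}$ and $t=\lfloor l'/p^k\rfloor$: $W_{s,l'}\to V_{s,l'-p^kt}$, block $B_{p^kt,\,p^k(p-1-t)}$. A path ending at a vertex $v$ is a sequence of edges starting at some $S_i$ and going up one floor at a time to $v$ ($S_i\to V_{1,\cdot}\to W_{2,\cdot}\to V_{2,\cdot}\to W_{3,\cdot}\to\cdots\to v$); $\mathcal P(v)$ is the set of all paths ending at $v$. The blocks of a path are numbered $B^2,B^3,\dots,B^N$: $B^2$ is the block of the edge leaving $S_i$, and for $j\ge2$, $B^{2j-1}$ is the block of the edge into $W_{j,\cdot}$ and $B^{2j}$ the block of the edge into $V_{j,\cdot}$. Write $B^j=B_{m_j,n_j}$. Descents: $1\in\mathrm{Des}(P)$ iff $m_2=p^kt$ with $0\le t<\frac{p-1}{2}$; $2\notin\mathrm{Des}(P)$; for $3\le j<N$, $j\in\mathrm{Des}(P)$ iff $m_j>m_{j+1}$ and $n_j<n_{j+1}$. $\mathrm{des}(P)=|\mathrm{Des}(P)|$. The $p^k$-Fibonacci number of a vertex $v$ is $\mathcal M_v=\sum_{P\in\mathcal P(v)}\mathrm{des}(P)$. *)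

theory Defs
  imports Main "HOL-Computational_Algebra.Primes"
begin

text \<open>A path ending at a vertex on floor 2(k+s)
 is encoded by the list of vertex indices [i, l_1, l'_2, l_2, ..., l'_s, l_s]:
 position 0 is S_i, position 2r-1 is V_{r,.}, position 2r-2 (r>=2) is W_{r,.}.
 Since edges are determined by their endpoints, this encodes the path.\<close>

definition valid_edge :: "nat \<Rightarrow> nat \<Rightarrow> nat \<Rightarrow> nat \<Rightarrow> nat \<Rightarrow> bool" where
  "valid_edge p k j a b =
    (if j = 0 then a < p^k * (p - 1) \<and> b < p^k \<and> (\<exists>t\<le>p - 2. a = p^k * t + b)
     else if odd j then a < p^k \<and> b < p^(k+1) \<and> (\<exists>\<beta>\<le>p - 1. b = p * a + \<beta>)
     else a < p^(k+1) \<and> b = a - p^k * (a div p^k))"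

text \<open>Block (m,n) of the edge leaving position j (this is block B^(j+2)).\<close>
definition edge_block :: "nat \<Rightarrow> nat \<Rightarrow> nat \<Rightarrow> nat \<Rightarrow> nat \<Rightarrow> nat \<times> nat" where
  "edge_block p k j a b =
    (if j = 0 then (p^k * (a div p^k), p^k * (p - 2 - a div p^k))
     else if odd j then (let c = (p - 1) * a + (b - p * a) in (p^k * (p - 1) - c, c))
     else (p^k * (a div p^k), p^k * (p - 1 - a div p^k)))"

definition paths_V :: "nat \<Rightarrow> nat \<Rightarrow> nat \<Rightarrow> nat \<Rightarrow> nat list set" where
  "paths_V p k s l = {xs. length xs = 2 * s \<and> last xs = l \<and>
      (\<forall>j < 2 * s - 1. valid_edge p k j (xs ! j) (xs ! (j + 1)))}"

definition blk :: "nat \<Rightarrow> nat \<Rightarrow> nat list \<Rightarrow> nat \<Rightarrow> nat \<times> nat" where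
  "blk p k xs J = edge_block p k (J - 2) (xs ! (J - 2)) (xs ! (J - 1))"

text \<open>Descent set; N = length xs (blocks B^2..B^N).\<close>
definition Des :: "nat \<Rightarrow> nat \<Rightarrow> nat list \<Rightarrow> nat set" where
  "Des p k xs =
    {J. J = 1 \<and> (\<exists>t. fst (blk p k xs 2) = p^k * t \<and> 2 * t < p - 1)} \<union>
    {J. 3 \<le> J \<and> J < length xs \<and> fst (blk p k xs J) > fst (blk p k xs (J + 1))
         \<and> snd (blk p k xs J) < snd (blk p k xs (J + 1))}"

definition des :: "nat \<Rightarrow> nat \<Rightarrow> nat list \<Rightarrow> nat" where
  "des p k xs = card (Des p k xs)"

definition fib_V :: "nat \<Rightarrow> nat \<Rightarrow> nat \<Rightarrow> nat \<Rightarrow> nat" where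
  "fib_V p k s l = (\<Sum>xs \<in> paths_V p k s l. des p k xs)"

end

theory Submission
  imports Defs
begin

abbreviation P where "P p s \<equiv> paths_V p 0 s 0"

lemma P1: "P p 1 = (\<lambda>t. [t,0]) ` {..<p-1}"
proof (rule set_eqI, rule iffI)
  fix xs assume "xs \<in> P p 1"
  then have "length xs = 2" "last xs = 0" "valid_edge p 0 0 (xs!0) (xs!1)"
    by (auto simp: paths_V_def)
  then show "xs \<in> (\<lambda>t. [t,0]) ` {..<p-1}"
    by (cases xs rule: list.exhaust; cases "tl xs"; auto simp: valid_edge_def)
next
  fix xs assume "xs \<in> (\<lambda>t. [t,0]) ` {..<p-1}"
  then obtain t where "xs = [t,0]" "t < p-1" by auto
  then show "xs \<in> P p 1" by (auto simp: paths_V_def valid_edge_def)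
qed

lemma P1': "P p (Suc 0) = (\<lambda>t. [t,0]) ` {..<p-1}"
  using P1 by simp

lemma P_Suc:
  assumes "s \<ge> 1"
  shows "P p (Suc s) = (\<lambda>(ys,b). ys @ [b,0]) ` (P p s \<times> {..<p})"
proof (rule set_eqI, rule iffI)
  fix xs assume xs: "xs \<in> P p (Suc s)"
  then have len: "length xs = 2*s+2" and la: "last xs = 0"
    and ve: "\<And>j. j < 2*s+1 \<Longrightarrow> valid_edge p 0 j (xs!j) (xs!(j+1))"
    by (auto simp: paths_V_def)
  define ys where "ys = take (2*s) xs"
  have x1: "xs!(2*s+1) = 0"
  proof -
    have "xs \<noteq> []" using len by auto
    then show ?thesis using la len last_conv_nth[of xs] by simp
  qed
  have xs_eq: "xs = ys @ [xs!(2*s), 0]"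
  proof (rule nth_equalityI)
    show "length xs = length (ys @ [xs!(2*s), 0])" using len by (simp add: ys_def)
  next
    fix i assume "i < length xs"
    then have "i < 2*s \<or> i = 2*s \<or> i = 2*s+1" using len by auto
    then show "xs!i = (ys @ [xs!(2*s), 0])!i" using len x1
      by (auto simp: ys_def nth_append)
  qed
  have e1: "valid_edge p 0 (2*s-1) (xs!(2*s-1)) (xs!(2*s))"
    using ve[of "2*s-1"] assms by (simp add: Suc_diff_le)
  have oddj: "odd (2*s-1)" using assms by simp
  have "xs!(2*s-1) = 0" "xs!(2*s) < p" using e1 oddj assms
    by (auto simp: valid_edge_def)
  have ysP: "ys \<in> P p s"
    unfolding paths_V_def
  proof (intro CollectI conjI allI impI)
    show "length ys = 2*s" using len by (simp add: ys_def)
    have "ys \<noteq> []" "length ys = 2*s" using len assms by (auto simp: ys_def)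
    then show "last ys = 0" using \<open>xs!(2*s-1) = 0\<close> last_conv_nth[of ys]
      by (simp add: ys_def)
    fix j assume "j < 2*s-1"
    then show "valid_edge p 0 j (ys!j) (ys!(j+1))" using ve[of j]
      by (simp add: ys_def)
  qed
  show "xs \<in> (\<lambda>(ys,b). ys @ [b,0]) ` (P p s \<times> {..<p})"
    using xs_eq ysP \<open>xs!(2*s) < p\<close> by (auto intro!: image_eqI[where x="(ys, xs!(2*s))"])
next
  fix xs assume "xs \<in> (\<lambda>(ys,b). ys @ [b,0]) ` (P p s \<times> {..<p})"
  then obtain ys b where xs: "xs = ys @ [b,0]" and ys: "ys \<in> P p s" and b: "b < p" by auto
  from ys have len: "length ys = 2*s" and la: "last ys = 0"
    and ve: "\<And>j. j < 2*s-1 \<Longrightarrow> valid_edge p 0 j (ys!j) (ys!(j+1))"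
    by (auto simp: paths_V_def)
  have y1: "ys!(2*s-1) = 0"
  proof -
    have "ys \<noteq> []" using len assms by auto
    then show ?thesis using la len last_conv_nth[of ys] by simp
  qed
  show "xs \<in> P p (Suc s)"
    unfolding paths_V_def
  proof (intro CollectI conjI allI impI)
    show "length xs = 2 * Suc s" using len xs by simp
    show "last xs = 0" using xs by simp
    fix j assume j: "j < 2 * Suc s - 1"
    then have "j < 2*s-1 \<or> j = 2*s-1 \<or> j = 2*s" using assms by auto
    then show "valid_edge p 0 j (xs!j) (xs!(j+1))"
    proof (elim disjE)
      assume jj: "j < 2*s-1"
      then have "xs!j = ys!j" "xs!(j+1) = ys!(j+1)" using len xs by (auto simp: nth_append)
      then show ?thesis using ve[OF jj] by simp
    next
      assume jj: "j = 2*s-1"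
      have "xs!j = 0" "xs!(j+1) = b" using jj len xs y1 assms by (auto simp: nth_append)
      moreover have "odd j" using jj assms by simp
      ultimately show ?thesis using b by (auto simp: valid_edge_def)
    next
      assume jj: "j = 2*s"
      have "xs!j = b" "xs!(j+1) = 0" using jj len xs by (auto simp: nth_append)
      then show ?thesis using jj assms b by (auto simp: valid_edge_def)
    qed
  qed
qed

lemma inj_app: "inj_on (\<lambda>(ys,b). ys @ [b,(0::nat)]) A"
  by (auto simp: inj_on_def)

lemma blk_app_old:
  assumes "J \<le> length ys" "J \<ge> 2"
  shows "blk p 0 (ys @ zs) J = blk p 0 ys J"
proof -
  have "J-2 < length ys" "J-1 < length ys" using assms by auto
  then show ?thesis by (simp add: blk_def nth_append)
qed

lemma Des_app:
  assumes ys: "ys \<in> P p s" and s: "s \<ge> 1" and b: "b < p"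
  shows "Des p 0 (ys @ [b,0]) = Des p 0 ys
     \<union> (if 2 \<le> s \<and> p \<le> ys!(2*s-2) + b then {2*s} else {})
     \<union> (if 2*b < p-1 then {2*s+1} else {})"
proof -
  from ys have len: "length ys = 2*s" and la: "last ys = 0"
    and ve: "\<And>j. j < 2*s-1 \<Longrightarrow> valid_edge p 0 j (ys!j) (ys!(j+1))"
    by (auto simp: paths_V_def)
  have y1: "ys!(2*s-1) = 0"
  proof -
    have "ys \<noteq> []" using len s by auto
    then show ?thesis using la len last_conv_nth[of ys] by simp
  qed
  let ?xs = "ys @ [b,0]"
  have B1: "blk p 0 ?xs (2*s+1) = (p-1-b, b)"
  proof -
    have "?xs!(2*s-1) = 0" "?xs!(2*s) = b" using len y1 s by (auto simp: nth_append)
    moreover have "odd (2*s-1)" using s by simp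
    moreover have "2*s+1-2 = 2*s-1" "2*s+1-1 = 2*s" using s by auto
    ultimately show ?thesis by (simp add: blk_def edge_block_def Let_def)
  qed
  have B2: "blk p 0 ?xs (2*s+2) = (b, p-1-b)"
    using len s by (simp add: blk_def edge_block_def nth_append)
  have B0: "blk p 0 ?xs (2*s) = (ys!(2*s-2), p-1-ys!(2*s-2))" if "s \<ge> 2"
  proof -
    have "?xs!(2*s-2) = ys!(2*s-2)" "?xs!(2*s-1) = ys!(2*s-1)" using len s by (auto simp: nth_append)
    then show ?thesis using that by (simp add: blk_def edge_block_def)
  qed
  have a_lt: "ys!(2*s-2) < p" if "s \<ge> 2"
  proof -
    obtain j where j: "j = 2*s-3" by simp
    have "j < 2*s-1" "odd j" "j \<noteq> 0" "j+1 = 2*s-2" using that j by presburger+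
    then have "valid_edge p 0 j (ys!j) (ys!(2*s-2))" using ve[of j] by metis
    then show ?thesis using \<open>odd j\<close> \<open>j \<noteq> 0\<close> unfolding valid_edge_def by simp
  qed
  show ?thesis
  proof (rule set_eqI)
    fix J
    have lx: "length ?xs = 2*s+2" using len by simp
    have c1: "(1 \<in> Des p 0 ?xs) = (1 \<in> Des p 0 ys)"
      using blk_app_old[where J=2 and ys=ys and zs="[b,0]" and p=p] len s by (simp add: Des_def)
    consider "J = 1" | "J \<noteq> 1 \<and> J < 3" | "3 \<le> J \<and> J < 2*s" | "J = 2*s \<and> 3 \<le> J" | "J = 2*s+1"
      | "J > 2*s+1" using s by linarith
    then show "J \<in> Des p 0 ?xs \<longleftrightarrow> J \<in> Des p 0 ys
     \<union> (if 2 \<le> s \<and> p \<le> ys!(2*s-2) + b then {2*s} else {})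
     \<union> (if 2*b < p-1 then {2*s+1} else {})"
    proof cases
      case 1 then show ?thesis using c1 s by auto
    next
      case 2 then show ?thesis using s by (auto simp: Des_def)
    next
      case 3
      then have "blk p 0 ?xs J = blk p 0 ys J" "blk p 0 ?xs (J+1) = blk p 0 ys (J+1)"
        using blk_app_old len by auto
      then show ?thesis using 3 lx len by (auto simp: Des_def)
    next
      case 4
      then have s2: "s \<ge> 2" by linarith
      then show ?thesis using 4 B0[OF s2] a_lt[OF s2] B1 lx len b
        by (auto simp: Des_def)
    next
      case 5
      then show ?thesis using B1 B2 lx len b s by (auto simp: Des_def)
    next
      case 6
      then show ?thesis using lx len s by (auto simp: Des_def)
    qed
  qed
qed

lemma Des_sub: "length ys \<ge> 2 \<Longrightarrow> Des p 0 ys \<subseteq> {..<length ys}"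
  by (auto simp: Des_def)

lemma des_app:
  assumes ys: "ys \<in> P p s" and s: "s \<ge> 1" and b: "b < p"
  shows "des p 0 (ys @ [b,0]) = des p 0 ys
     + (if 2 \<le> s \<and> p \<le> ys!(2*s-2) + b then 1 else 0)
     + (if 2*b < p-1 then 1 else 0)"
proof -
  have len: "length ys = 2*s" using ys by (simp add: paths_V_def)
  have sub: "Des p 0 ys \<subseteq> {..<2*s}" using Des_sub[of ys p] len s by simp
  have fin: "finite (Des p 0 ys)" using sub finite_subset by blast
  have n1: "2*s \<notin> Des p 0 ys" "2*s+1 \<notin> Des p 0 ys" using sub by auto
  show ?thesis
    unfolding des_def Des_app[OF assms] using fin n1 by (auto simp: card_insert_if)
qed

lemma finite_P: "s \<ge> 1 \<Longrightarrow> finite (P p s)"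
proof (induction s rule: dec_induct)
  case base then show ?case by (simp add: P1')
next
  case (step n) then show ?case by (simp add: P_Suc)
qed

lemma card_P: "s \<ge> 1 \<Longrightarrow> card (P p s) = (p-1) * p^(s-1)"
proof (induction s rule: dec_induct)
  case base then show ?case by (simp add: P1' card_image inj_on_def)
next
  case (step n)
  have "card (P p (Suc n)) = card (P p n \<times> {..<p})"
    unfolding P_Suc[OF step.hyps(1)] by (rule card_image[OF inj_app])
  also have "... = card (P p n) * p" by (simp add: card_cartesian_product)
  moreover have "p^(n-1) * p = p^n" using step.hyps(1)
    by (metis Suc_diff_le diff_Suc_1 power_Suc2)
  ultimately show ?case using step by simp
qed

lemma sum_upto: "2 * (\<Sum>b<n. b) = n * (n - 1::nat)"
proof (induction n)
  case 0 then show ?case by simp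
next
  case (Suc n) then show ?case by (cases n) (simp_all add: algebra_simps)
qed

lemma sum_pair:
  assumes "s \<ge> 1"
  shows "(\<Sum>xs\<in>P p (Suc s). f xs) = (\<Sum>ys\<in>P p s. \<Sum>b<p. f (ys @ [b,0]))"
proof -
  have "(\<Sum>xs\<in>P p (Suc s). f xs) = (\<Sum>x\<in>P p s \<times> {..<p}. f ((\<lambda>(ys,b). ys @ [b,0]) x))"
    unfolding P_Suc[OF assms] by (rule sum.reindex[OF inj_app, unfolded comp_def])
  also have "... = (\<Sum>ys\<in>P p s. \<Sum>b<p. f (ys @ [b,0]))"
    by (subst sum.cartesian_product) (simp add: case_prod_beta)
  finally show ?thesis .
qed

lemma a_lt:
  assumes ys: "ys \<in> P p s" and s: "s \<ge> 2"
  shows "ys!(2*s-2) < p"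
proof -
  have ve: "\<And>j. j < 2*s-1 \<Longrightarrow> valid_edge p 0 j (ys!j) (ys!(j+1))"
    using ys by (auto simp: paths_V_def)
  obtain j where j: "j = 2*s-3" by simp
  have "j < 2*s-1" "odd j" "j \<noteq> 0" "j+1 = 2*s-2" using s j by presburger+
  then have "valid_edge p 0 j (ys!j) (ys!(2*s-2))" using ve[of j] by metis
  then show ?thesis using \<open>odd j\<close> \<open>j \<noteq> 0\<close> unfolding valid_edge_def by simp
qed

lemma cnt_half:
  assumes "p = 2*q+1"
  shows "(\<Sum>b<p. if 2*b < p-1 then 1 else 0::nat) = q"
proof -
  have "(\<Sum>b<p. if 2*b < p-1 then 1 else 0::nat) = card {b\<in>{..<p}. 2*b < p-1}"
    by (simp add: sum.inter_filter[symmetric])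
  also have "{b\<in>{..<p}. 2*b < p-1} = {..<q}" using assms by auto
  finally show ?thesis by simp
qed

lemma cnt_ge:
  assumes "a < (p::nat)"
  shows "(\<Sum>b<p. if p \<le> a + b then 1 else 0::nat) = a"
proof -
  have "(\<Sum>b<p. if p \<le> a + b then 1 else 0::nat) = card {b\<in>{..<p}. p \<le> a + b}"
    by (simp add: sum.inter_filter[symmetric])
  also have "{b\<in>{..<p}. p \<le> a + b} = {p-a..<p}" using assms by auto
  finally show ?thesis using assms by simp
qed

lemma G_val:
  assumes "p = 2*q+1" "s \<ge> 2"
  shows "(\<Sum>ys\<in>P p s. ys!(2*s-2)) = (p-1)*p^(s-2) * (p*q)"
proof -
  obtain s' where s': "s = Suc s'" "s' \<ge> 1" using assms(2) by (cases s) auto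
  have "(\<Sum>ys\<in>P p s. ys!(2*s-2)) = (\<Sum>ys\<in>P p s'. \<Sum>b<p. (ys @ [b,0])!(2*s-2))"
    unfolding s'(1) by (rule sum_pair[OF s'(2)])
  also have "... = (\<Sum>ys\<in>P p s'. \<Sum>b<p. b)"
  proof (rule sum.cong[OF refl])
    fix ys assume "ys \<in> P p s'"
    then have "length ys = 2*s'" by (simp add: paths_V_def)
    then show "(\<Sum>b<p. (ys @ [b,0])!(2*s-2)) = (\<Sum>b<p. b)" using s' by (simp add: nth_append)
  qed
  also have "... = card (P p s') * (\<Sum>b<p. b)" by simp
  also have "(\<Sum>b<p. b) = p*q" using sum_upto[of p] assms(1) by simp
  finally show ?thesis using card_P[OF s'(2)] s' by simp
qed

lemma F_rec:
  assumes "p = 2*q+1" "s \<ge> 1"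
  shows "fib_V p 0 (Suc s) 0 = p * fib_V p 0 s 0
     + (if s \<ge> 2 then (\<Sum>ys\<in>P p s. ys!(2*s-2)) else 0) + q * card (P p s)"
proof -
  have "fib_V p 0 (Suc s) 0 = (\<Sum>ys\<in>P p s. \<Sum>b<p. des p 0 (ys @ [b,0]))"
    unfolding fib_V_def by (rule sum_pair[OF assms(2)])
  also have "... = (\<Sum>ys\<in>P p s. p * des p 0 ys + (if s \<ge> 2 then ys!(2*s-2) else 0) + q)"
  proof (rule sum.cong[OF refl])
    fix ys assume ys: "ys \<in> P p s"
    have "(\<Sum>b<p. des p 0 (ys @ [b,0])) = (\<Sum>b<p. des p 0 ys
     + (if 2 \<le> s \<and> p \<le> ys!(2*s-2) + b then 1 else 0)
     + (if 2*b < p-1 then 1 else 0))"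
      using des_app[OF ys assms(2)] by simp
    also have "... = p * des p 0 ys + (\<Sum>b<p. if 2 \<le> s \<and> p \<le> ys!(2*s-2) + b then 1 else 0)
       + (\<Sum>b<p. if 2*b < p-1 then 1 else 0)"
      by (simp add: sum.distrib)
    also have "(\<Sum>b<p. if 2*b < p-1 then 1 else 0) = q" by (rule cnt_half[OF assms(1)])
    also have "(\<Sum>b<p. if 2 \<le> s \<and> p \<le> ys!(2*s-2) + b then 1 else 0) = (if s \<ge> 2 then ys!(2*s-2) else 0)"
    proof (cases "s \<ge> 2")
      case True then show ?thesis using cnt_ge[OF a_lt[OF ys True]] by simp
    next
      case False then show ?thesis by simp
    qed
    finally show "(\<Sum>b<p. des p 0 (ys @ [b,0])) = p * des p 0 ys + (if s \<ge> 2 then ys!(2*s-2) else 0) + q" .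
  qed
  also have "... = p * fib_V p 0 s 0 + (if s \<ge> 2 then (\<Sum>ys\<in>P p s. ys!(2*s-2)) else 0) + q * card (P p s)"
    by (simp add: sum.distrib fib_V_def sum_distrib_left)
  finally show ?thesis .
qed

lemma F1:
  assumes "p = 2*q+1"
  shows "fib_V p 0 1 0 = q"
proof -
  have "fib_V p 0 1 0 = (\<Sum>t<p-1. des p 0 [t,0])"
    unfolding fib_V_def P1 by (simp add: sum.reindex inj_on_def)
  also have "... = (\<Sum>t<p-1. if 2*t < p-1 then 1 else 0)"
  proof (rule sum.cong[OF refl])
    fix t
    have "Des p 0 [t,0] = (if 2*t < p-1 then {1} else {})"
      by (auto simp: Des_def blk_def edge_block_def)
    then show "des p 0 [t,0] = (if 2*t < p-1 then 1 else 0)" by (simp add: des_def)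
  qed
  also have "... = card {t\<in>{..<p-1}. 2*t < p-1}"
    by (simp add: sum.inter_filter[symmetric])
  also have "{t\<in>{..<p-1}. 2*t < p-1} = {..<q}" using assms by auto
  finally show ?thesis by simp
qed

lemma F_closed:
  assumes "p = 2*q+1"
  shows "int (fib_V p 0 (n+2) 0) = int q * (2 * (int n + 1) * int p ^ (n+1) - (2 * int n + 1) * int p ^ n)"
proof (induction n)
  case 0
  have h: "fib_V p 0 (0+2) 0 = p * q + q * (p - 1)"
    using F_rec[OF assms, of 1] F1[OF assms] card_P[of 1 p] by (simp add: numeral_2_eq_2)
  show ?case unfolding h using assms by (simp add: algebra_simps)
next
  case (Suc n)
  have r: "fib_V p 0 (Suc (n+2)) 0 = p * fib_V p 0 (n+2) 0 + (p-1)*p^n * (p*q) + q * ((p-1)*p^(n+1))"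
    using F_rec[OF assms, of "n+2"] G_val[OF assms, of "n+2"] card_P[of "n+2" p] by simp
  have pm: "p - 1 = 2*q" using assms by simp
  have "int (fib_V p 0 (Suc n+2) 0) = int (p * fib_V p 0 (n+2) 0 + (2*q)*p^n * (p*q) + q * ((2*q)*p^(n+1)))"
    using r unfolding pm by simp
  also have "... = int p * int (fib_V p 0 (n+2) 0) + (2*int q)*int p^n * (int p*int q) + int q * ((2*int q)*int p^(n+1))"
    by (simp only: of_nat_add of_nat_mult of_nat_power of_nat_numeral)
  also have "... = int q * (2 * (int (Suc n) + 1) * int p ^ (Suc n+1) - (2 * int (Suc n) + 1) * int p ^ Suc n)"
    unfolding Suc.IH using assms by (simp add: algebra_simps)
  finally show ?case .
qed

theorem mainTheorem5:
  fixes p s :: nat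
  assumes "prime p" and "odd p" and "s \<ge> 2"
  shows "int (fib_V p 0 s 0) =
    ((int p - 1) div 2) * (2 * (int s - 1) * int p ^ (s - 1) - (2 * int s - 3) * int p ^ (s - 2))"
proof -
  obtain q where q: "p = 2*q+1" using assms(2) oddE by blast
  obtain n where n: "s = n+2" using assms(3) by (metis add.commute le_Suc_ex)
  have "(int p - 1) div 2 = int q" using q by simp
  moreover have "s - 1 = n+1" "s - 2 = n" using n by auto
  moreover have "int s - 1 = int n + 1" "2 * int s - 3 = 2 * int n + 1" using n by auto
  ultimately show ?thesis using F_closed[OF q, of n] n by (simp add: algebra_simps)
qed

end
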